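(* Let $q\ge1$, $N=2^q$, and let $B^{(1)}=(b_{i,j})_{i,j=1}^{N-1}$ be the symmetric Toeplitz matrix with $b_{i,i}=\frac{2N}3-1$, $b_{i,j}=\frac N6-1$ if $|i-j|=1$, and $b_{i,j}=-1$ if $|i-j|\ge2$. For $k=2,\dots,q$ define $B^{(k)}=R_kB^{(k-1)}R_k^T$, where $R_k:\mathbb R^{N/2^{k-2}-1}\to\mathbb R^{N/2^{k-1}-1}$ is $(R_k\nu)_i=\nu_{2i-1}+2\nu_{2i}+\nu_{2i+1}$. Let $D_{(k)}$ be the diagonal of $B^{(k)}$. Then $1\le\lambda_{\max}(D_{(k)}^{-1}B^{(k)})<3$ for all $1\le k\le q$.
   Context: $B^{(k)}$ has size $(N/2^{k-1}-1)\times(N/2^{k-1}-1)$; $R_k$ is $4$ times the standard full-weighting restriction operator. *)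

theory Defs
  imports "Jordan_Normal_Form.Char_Poly"
begin

text \<open>Matrices are 0-indexed here: the paper's index i corresponds to i-1.\<close>

definition Bsize :: "nat \<Rightarrow> nat \<Rightarrow> nat" where
  "Bsize N k = N div 2 ^ (k - 1) - 1"

definition B1 :: "nat \<Rightarrow> real mat" where
  "B1 N = mat (N - 1) (N - 1) (\<lambda>(i, j).
      if i = j then 2 * real N / 3 - 1
      else if i = j + 1 \<or> j = i + 1 then real N / 6 - 1
      else -1)"

definition Rmat :: "nat \<Rightarrow> real mat" where
  "Rmat m = mat m (2 * m + 1) (\<lambda>(i, j).
      if j = 2 * i then 1
      else if j = 2 * i + 1 then 2
      else if j = 2 * i + 2 then 1
      else 0)"

text \<open>B^(k) for k >= 1 (the value at k = 0 is irrelevant).\<close>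
fun Bmat :: "nat \<Rightarrow> nat \<Rightarrow> real mat" where
  "Bmat N 0 = B1 N"
| "Bmat N (Suc 0) = B1 N"
| "Bmat N (Suc (Suc k)) =
     Rmat (Bsize N (Suc (Suc k))) * Bmat N (Suc k) * transpose_mat (Rmat (Bsize N (Suc (Suc k))))"

definition diag_part :: "real mat \<Rightarrow> real mat" where
  "diag_part A = mat_diag (dim_row A) (\<lambda>i. A $$ (i, i))"

text \<open>Inverse of the diagonal part, D^(-1) (diagonal entries assumed nonzero).\<close>
definition diag_part_inv :: "real mat \<Rightarrow> real mat" where
  "diag_part_inv A = mat_diag (dim_row A) (\<lambda>i. 1 / A $$ (i, i))"

definition lambda_max :: "real mat \<Rightarrow> real" where
  "lambda_max A = Max {l. eigenvalue A l}"

end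

theory Submission imports Defs begin

definition tf :: "real \<Rightarrow> real \<Rightarrow> real \<Rightarrow> nat \<Rightarrow> nat \<Rightarrow> real" where
  "tf a b c i j = (if i = j then a else if i = j + 1 \<or> j = i + 1 then b else c)"

definition Toep :: "nat \<Rightarrow> real \<Rightarrow> real \<Rightarrow> real \<Rightarrow> real mat" where
  "Toep n a b c = mat n n (\<lambda>(i,j). tf a b c i j)"

lemma R_sum:
  assumes "i < m"
  shows "(\<Sum>x\<in>{0..<2*m+1}. Rmat m $$ (i,x) * g x) = g (2*i) + 2 * g (2*i+1) + g (2*i+2)"
proof -
  have "(\<Sum>x\<in>{0..<2*m+1}. Rmat m $$ (i,x) * g x) =
     (\<Sum>x\<in>{0..<2*m+1}. (if x = 2*i then g (2*i) else 0) + (if x = 2*i+1 then 2 * g (2*i+1) else 0)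
        + (if x = 2*i+2 then g (2*i+2) else 0))"
    by (rule sum.cong, auto simp: Rmat_def assms)
  also have "\<dots> = g (2*i) + 2 * g (2*i+1) + g (2*i+2)"
    using assms by (simp add: sum.distrib)
  finally show ?thesis .
qed

lemma nine:
  assumes "i < m" "j < m"
  shows "(tf a b c (2*i) (2*j) + 2 * tf a b c (2*i+1) (2*j) + tf a b c (2*i+2) (2*j))
     + 2 * (tf a b c (2*i) (2*j+1) + 2 * tf a b c (2*i+1) (2*j+1) + tf a b c (2*i+2) (2*j+1))
     + (tf a b c (2*i) (2*j+2) + 2 * tf a b c (2*i+1) (2*j+2) + tf a b c (2*i+2) (2*j+2))
     = tf (6*a+8*b+2*c) (a+4*b+11*c) (16*c) i j"
proof -
  consider "i = j" | "i = j + 1" | "j = i + 1" | "i > j + 1" | "j > i + 1" by linarith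
  then show ?thesis by cases (auto simp: tf_def)
qed

lemma RTR:
  "Rmat m * Toep (2*m+1) a b c * transpose_mat (Rmat m) = Toep m (6*a+8*b+2*c) (a+4*b+11*c) (16*c)"
proof (rule eq_matI)
  show "dim_row (Rmat m * Toep (2*m+1) a b c * transpose_mat (Rmat m)) = dim_row (Toep m (6*a+8*b+2*c) (a+4*b+11*c) (16*c))"
    by (simp add: Rmat_def Toep_def)
  show "dim_col (Rmat m * Toep (2*m+1) a b c * transpose_mat (Rmat m)) = dim_col (Toep m (6*a+8*b+2*c) (a+4*b+11*c) (16*c))"
    by (simp add: Rmat_def Toep_def)
  fix i j assume i: "i < dim_row (Toep m (6*a+8*b+2*c) (a+4*b+11*c) (16*c))"
    and j: "j < dim_col (Toep m (6*a+8*b+2*c) (a+4*b+11*c) (16*c))"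
  hence i: "i < m" and j: "j < m" by (auto simp: Toep_def)
  have inner: "(Rmat m * Toep (2*m+1) a b c) $$ (i, x) = tf a b c (2*i) x + 2 * tf a b c (2*i+1) x + tf a b c (2*i+2) x"
    if x: "x < 2*m+1" for x
  proof -
    have "(Rmat m * Toep (2*m+1) a b c) $$ (i, x) = (\<Sum>k\<in>{0..<2*m+1}. Rmat m $$ (i,k) * tf a b c k x)"
      using x i by (auto simp: scalar_prod_def Rmat_def Toep_def intro!: sum.cong)
    also have "\<dots> = tf a b c (2*i) x + 2 * tf a b c (2*i+1) x + tf a b c (2*i+2) x"
      by (rule R_sum[OF i])
    finally show ?thesis .
  qed
  have "(Rmat m * Toep (2*m+1) a b c * transpose_mat (Rmat m)) $$ (i, j)
     = (\<Sum>k\<in>{0..<2*m+1}. Rmat m $$ (j,k) * (Rmat m * Toep (2*m+1) a b c) $$ (i, k))"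
    using i j by (auto simp: scalar_prod_def Rmat_def Toep_def intro!: sum.cong)
  also have "\<dots> = (\<Sum>k\<in>{0..<2*m+1}. Rmat m $$ (j,k) * (tf a b c (2*i) k + 2 * tf a b c (2*i+1) k + tf a b c (2*i+2) k))"
    by (rule sum.cong[OF refl], subst inner, auto)
  also have "\<dots> = (tf a b c (2*i) (2*j) + 2 * tf a b c (2*i+1) (2*j) + tf a b c (2*i+2) (2*j))
     + 2 * (tf a b c (2*i) (2*j+1) + 2 * tf a b c (2*i+1) (2*j+1) + tf a b c (2*i+2) (2*j+1))
     + (tf a b c (2*i) (2*j+2) + 2 * tf a b c (2*i+1) (2*j+2) + tf a b c (2*i+2) (2*j+2))"
    by (rule R_sum[OF j])
  also have "\<dots> = tf (6*a+8*b+2*c) (a+4*b+11*c) (16*c) i j" by (rule nine[OF i j])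
  finally show "(Rmat m * Toep (2*m+1) a b c * transpose_mat (Rmat m)) $$ (i, j) = Toep m (6*a+8*b+2*c) (a+4*b+11*c) (16*c) $$ (i, j)"
    using i j by (simp add: Toep_def)
qed


lemma Bmat_closed:
  assumes "q \<ge> 1" "N = 2 ^ q"
  shows "1 \<le> k \<Longrightarrow> k \<le> q \<Longrightarrow> Bmat N k = Toep (2^(q-k+1) - 1)
      (16^(k-1) * (2 * 2^(q-k+1) / 3 - 1)) (16^(k-1) * (2^(q-k+1) / 6 - 1)) (- (16^(k-1)))"
proof (induction k)
  case 0 then show ?case by simp
next
  case (Suc k)
  show ?case
  proof (cases k)
    case 0
    then have "Bmat N (Suc k) = Toep (N-1) (2*real N/3-1) (real N/6-1) (-1)"
      by (simp add: B1_def Toep_def tf_def)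
    moreover have "real N = 2^q" using assms by simp
    ultimately show ?thesis using 0 assms by simp
  next
    case (Suc k')
    have kq: "k' + 2 \<le> q" using Suc.prems Suc by simp
    have IH: "Bmat N (Suc k') = Toep (2^(q-k') - 1)
      (16^k' * (2 * 2^(q-k') / 3 - 1)) (16^k' * (2^(q-k') / 6 - 1)) (- (16^k'))"
    proof -
      have e: "q - Suc k' + 1 = q - k'" "Suc k' - 1 = k'" using kq by auto
      have "1 \<le> Suc k'" "Suc k' \<le> q" using kq by auto
      from Suc.IH[unfolded Suc, OF this] show ?thesis unfolding e .
    qed
    define p where "p = q - k' - 1"
    have p1: "q - k' = Suc p" and p2: "q - Suc (Suc k') + 1 = p" using kq by (auto simp: p_def)
    have pge: "p \<ge> 1" using kq by (simp add: p_def)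
    have bs: "Bsize N (Suc (Suc k')) = 2^p - 1"
    proof -
      have "p + Suc k' = q" using kq by (simp add: p_def)
      then have "N = 2^p * 2^(Suc k')" using assms(2) by (metis power_add)
      then have "N div 2 ^ (Suc (Suc k') - 1) = 2^p" by simp
      then show ?thesis unfolding Bsize_def by simp
    qed
    have sz: "(2::nat)^(q-k') - 1 = 2 * (2^p - 1) + 1"
    proof -
      have "(2::nat)^p \<ge> 1" by simp
      moreover have "(2::nat)^(q-k') = 2 * 2^p" by (simp add: p1)
      ultimately show ?thesis by linarith
    qed
    have "Bmat N (Suc (Suc k')) = Rmat (2^p - 1) * Toep (2 * (2^p - 1) + 1)
      (16^k' * (2 * 2^(q-k') / 3 - 1)) (16^k' * (2^(q-k') / 6 - 1)) (- (16^k')) * transpose_mat (Rmat (2^p - 1))"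
      using IH bs sz by simp
    also have "\<dots> = Toep (2^p - 1) (16^(Suc k') * (2 * 2^p / 3 - 1)) (16^(Suc k') * (2^p / 6 - 1)) (- (16^(Suc k')))"
      unfolding RTR p1 by (simp add: algebra_simps)
    finally show ?thesis using p2 Suc by simp
  qed
qed


lemma gersh:
  assumes A: "A \<in> carrier_mat n n" and ev: "eigenvalue A (l::real)"
  shows "\<exists>i<n. \<bar>l - A$$(i,i)\<bar> \<le> (\<Sum>j\<in>{0..<n}-{i}. \<bar>A$$(i,j)\<bar>)"
proof -
  from ev obtain v where v: "v \<in> carrier_vec n" "v \<noteq> 0\<^sub>v n" "A *\<^sub>v v = l \<cdot>\<^sub>v v"
    using A unfolding eigenvalue_def eigenvector_def by auto
  have n: "n > 0"
  proof (rule ccontr)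
    assume "\<not> n > 0" then have "n = 0" by simp
    then have "v = 0\<^sub>v n" using v(1) by (intro eq_vecI) auto
    with v(2) show False by simp
  qed
  define S where "S = (\<lambda>j. \<bar>v$j\<bar>) ` {0..<n}"
  have "finite S" "S \<noteq> {}" using n by (auto simp: S_def)
  then have "Max S \<in> S" by (rule Max_in)
  then obtain i where i: "i < n" "\<bar>v$i\<bar> = Max S" by (auto simp: S_def)
  have mx: "\<bar>v$j\<bar> \<le> \<bar>v$i\<bar>" if "j < n" for j
    using that i \<open>finite S\<close> by (auto simp: S_def)
  have vi: "\<bar>v$i\<bar> > 0"
  proof (rule ccontr)
    assume "\<not> \<bar>v$i\<bar> > 0"
    then have "\<And>j. j < n \<Longrightarrow> v$j = 0" using mx by force
    then have "v = 0\<^sub>v n" using v(1) by (intro eq_vecI) auto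
    with v(2) show False by simp
  qed
  have "(A *\<^sub>v v) $ i = l * v$i" using v(3) i v(1) by simp
  moreover have "(A *\<^sub>v v) $ i = (\<Sum>j\<in>{0..<n}. A$$(i,j) * v$j)"
    using A v(1) i by (simp add: scalar_prod_def)
  moreover have "(\<Sum>j\<in>{0..<n}. A$$(i,j) * v$j) = A$$(i,i) * v$i + (\<Sum>j\<in>{0..<n}-{i}. A$$(i,j) * v$j)"
    using i by (subst sum.remove[of _ i]) auto
  ultimately have eq: "(l - A$$(i,i)) * v$i = (\<Sum>j\<in>{0..<n}-{i}. A$$(i,j) * v$j)"
    by (simp add: algebra_simps)
  have "\<bar>l - A$$(i,i)\<bar> * \<bar>v$i\<bar> = \<bar>\<Sum>j\<in>{0..<n}-{i}. A$$(i,j) * v$j\<bar>"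
    by (simp add: eq[symmetric] abs_mult)
  also have "\<dots> \<le> (\<Sum>j\<in>{0..<n}-{i}. \<bar>A$$(i,j) * v$j\<bar>)" by (rule sum_abs)
  also have "\<dots> \<le> (\<Sum>j\<in>{0..<n}-{i}. \<bar>A$$(i,j)\<bar> * \<bar>v$i\<bar>)"
    by (rule sum_mono) (auto simp: abs_mult intro!: mult_left_mono mx)
  also have "\<dots> = (\<Sum>j\<in>{0..<n}-{i}. \<bar>A$$(i,j)\<bar>) * \<bar>v$i\<bar>"
    by (simp add: sum_distrib_right)
  finally have "\<bar>l - A$$(i,i)\<bar> * \<bar>v$i\<bar> \<le> (\<Sum>j\<in>{0..<n}-{i}. \<bar>A$$(i,j)\<bar>) * \<bar>v$i\<bar>" .
  then have "\<bar>l - A$$(i,i)\<bar> \<le> (\<Sum>j\<in>{0..<n}-{i}. \<bar>A$$(i,j)\<bar>)"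
    using vi by (simp add: mult_le_cancel_right)
  then show ?thesis using i by blast
qed

lemma tf_split:
  "tf a b c i j = c + (if j = i then a - c else 0) + (if j = i + 1 then b - c else 0) + (if j + 1 = i then b - c else 0)"
  by (auto simp: tf_def)

lemma rowsum_bound:
  assumes "i < n"
  shows "(\<Sum>j\<in>{0..<n}-{i}. \<bar>tf a b c i j\<bar>) \<le> real (n - 1) * \<bar>c\<bar> + 2 * \<bar>b\<bar>"
proof -
  have "(\<Sum>j\<in>{0..<n}-{i}. \<bar>tf a b c i j\<bar>) \<le>
      (\<Sum>j\<in>{0..<n}-{i}. \<bar>c\<bar> + (if j = i + 1 then \<bar>b\<bar> else 0) + (if j + 1 = i then \<bar>b\<bar> else 0))"
    by (rule sum_mono) (auto simp: tf_def)
  also have "\<dots> = (\<Sum>j\<in>{0..<n}-{i}. \<bar>c\<bar>) + (\<Sum>j\<in>{0..<n}-{i}. (if j = i + 1 then \<bar>b\<bar> else 0))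
      + (\<Sum>j\<in>{0..<n}-{i}. (if j + 1 = i then \<bar>b\<bar> else 0))"
    by (simp add: sum.distrib)
  also have "(\<Sum>j\<in>{0..<n}-{i}. \<bar>c\<bar>) = real (n - 1) * \<bar>c\<bar>"
    using assms by simp
  also have "(\<Sum>j\<in>{0..<n}-{i}. (if j = i + 1 then \<bar>b\<bar> else 0)) \<le> \<bar>b\<bar>"
    by (simp add: sum.delta')
  also have "(\<Sum>j\<in>{0..<n}-{i}. (if j + 1 = i then \<bar>b\<bar> else 0)) \<le> \<bar>b\<bar>"
  proof -
    have "(\<Sum>j\<in>{0..<n}-{i}. (if j + 1 = i then \<bar>b\<bar> else 0)) = (\<Sum>j\<in>{0..<n}-{i}. (if j = i - 1 \<and> i > 0 then \<bar>b\<bar> else 0))"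
      by (rule sum.cong) auto
    also have "\<dots> \<le> \<bar>b\<bar>"
      by (cases "i > 0") (simp_all add: sum.delta')
    finally show ?thesis .
  qed
  finally show ?thesis by simp
qed


definition vv :: "nat \<Rightarrow> real" where
  "vv j = (if j mod 4 = 0 then 1 else if j mod 4 = 2 then -1 else 0)"

lemma sum_vv: "(\<Sum>j\<in>{0..<4*t+3}. vv j) = 0"
proof (induction t)
  case 0 then show ?case by (simp add: vv_def numeral_3_eq_3)
next
  case (Suc t)
  have e: "4 * Suc t + 3 = Suc (Suc (Suc (Suc (4*t+3))))" by simp
  have m: "(4*t+3) mod 4 = 3" "Suc (4*t+3) mod 4 = 0" "Suc (Suc (4*t+3)) mod 4 = 1"
      "Suc (Suc (Suc (4*t+3))) mod 4 = 2" by presburger+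
  show ?case unfolding e sum.atLeast0_lessThan_Suc Suc.IH using m by (simp add: vv_def)
qed

lemma vv_mod: "vv (4*a + r) = vv r"
  unfolding vv_def by simp

lemma neigh:
  assumes n: "n = 4*t+3" and i: "i < n"
  shows "(if i + 1 < n then vv (i+1) else 0) + (if i > 0 then vv (i-1) else 0) = 0"
proof -
  define a where "a = i div 4"
  define r where "r = i mod 4"
  have ia: "i = 4*a + r" unfolding a_def r_def by simp
  have r: "r < 4" unfolding r_def by simp
  consider "r = 0" | "r = 1" | "r = 2" | "r = 3" using r by linarith
  then show ?thesis
  proof cases
    case 1
    have "vv (i+1) = vv 1" unfolding ia 1 by (metis add_0_right add.assoc vv_mod)
    moreover have "i > 0 \<Longrightarrow> vv (i-1) = 0"
    proof -
      assume "i > 0"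
      then have "a > 0" using ia 1 by simp
      then have "i - 1 = 4*(a-1) + 3" using ia 1 by simp
      then show "vv (i-1) = 0" by (simp add: vv_mod) (simp add: vv_def)
    qed
    ultimately show ?thesis by (simp add: vv_def)
  next
    case 2
    have "i + 1 = 4*a + 2" "i - 1 = 4*a + 0" "i > 0" using ia 2 by simp_all
    moreover have "i + 1 < n" using ia 2 n i by presburger
    ultimately show ?thesis by (simp only: vv_mod if_True) (simp add: vv_def)
  next
    case 3
    have "i + 1 = 4*a + 3" "i - 1 = 4*a + 1" "i > 0" using ia 3 by simp_all
    then show ?thesis by (simp only: vv_mod) (simp add: vv_def)
  next
    case 4
    have "i + 1 = 4*(a+1) + 0" "i - 1 = 4*a + 2" "i > 0" using ia 4 by simp_all
    moreover have "i + 1 < n" using ia 4 n i by presburger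
    ultimately show ?thesis by (simp only: vv_mod if_True) (simp add: vv_def)
  qed
qed

lemma eig_big:
  assumes n: "n = 4*t+3"
  shows "eigenvalue (Toep n 1 b c) (1 - c)"
  unfolding eigenvalue_def eigenvector_def
proof (intro exI conjI)
  let ?v = "vec n vv"
  show "?v \<in> carrier_vec (dim_row (Toep n 1 b c))" by (simp add: Toep_def)
  show "?v \<noteq> 0\<^sub>v (dim_row (Toep n 1 b c))"
  proof
    assume "?v = 0\<^sub>v (dim_row (Toep n 1 b c))"
    then have "?v $ 0 = 0" using n by (simp add: Toep_def)
    then show False using n by (simp add: vv_def)
  qed
  show "Toep n 1 b c *\<^sub>v ?v = (1 - c) \<cdot>\<^sub>v ?v"
  proof (rule eq_vecI)
    show "dim_vec (Toep n 1 b c *\<^sub>v ?v) = dim_vec ((1 - c) \<cdot>\<^sub>v ?v)" by (simp add: Toep_def)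
    fix i assume "i < dim_vec ((1 - c) \<cdot>\<^sub>v ?v)"
    then have i: "i < n" by simp
    have "(Toep n 1 b c *\<^sub>v ?v) $ i = (\<Sum>j\<in>{0..<n}. tf 1 b c i j * vv j)"
      using i by (simp add: Toep_def scalar_prod_def)
    also have "\<dots> = (\<Sum>j\<in>{0..<n}. c * vv j + (if j = i then (1 - c) * vv i else 0)
        + (if j = i + 1 then (b - c) * vv (i+1) else 0) + (if 0 < i \<and> j = i - 1 then (b - c) * vv (i - 1) else 0))"
    proof (rule sum.cong[OF refl])
      fix j
      show "tf 1 b c i j * vv j = c * vv j + (if j = i then (1 - c) * vv i else 0)
        + (if j = i + 1 then (b - c) * vv (i+1) else 0) + (if 0 < i \<and> j = i - 1 then (b - c) * vv (i - 1) else 0)"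
      proof (cases "j = i")
        case True then show ?thesis by (auto simp: tf_def algebra_simps)
      next
        case F1: False
        show ?thesis
        proof (cases "j = i + 1")
          case True then show ?thesis by (auto simp: tf_def algebra_simps)
        next
          case F2: False
          show ?thesis
          proof (cases "0 < i \<and> j = i - 1")
            case True
            then have "i = j + 1" by simp
            then show ?thesis using True by (auto simp: tf_def algebra_simps)
          next
            case False
            then have "i \<noteq> j + 1" by auto
            then show ?thesis using F1 F2 False by (auto simp: tf_def)
          qed
        qed
      qed
    qed
    also have "\<dots> = (\<Sum>j\<in>{0..<n}. c * vv j) + (\<Sum>j\<in>{0..<n}. if j = i then (1 - c) * vv i else 0)
        + (\<Sum>j\<in>{0..<n}. if j = i + 1 then (b - c) * vv (i+1) else 0) + (\<Sum>j\<in>{0..<n}. if 0 < i \<and> j = i - 1 then (b - c) * vv (i - 1) else 0)"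
      by (simp only: sum.distrib)
    also have "(\<Sum>j\<in>{0..<n}. c * vv j) = 0" using sum_vv[of t] n by (simp add: sum_distrib_left[symmetric])
    also have "(\<Sum>j\<in>{0..<n}. if j = i then (1 - c) * vv i else 0) = (1 - c) * vv i"
      using i by (simp add: sum.delta')
    also have "(\<Sum>j\<in>{0..<n}. if j = i + 1 then (b - c) * vv (i+1) else 0) = (b - c) * (if i + 1 < n then vv (i+1) else 0)"
      by (simp add: sum.delta')
    also have "(\<Sum>j\<in>{0..<n}. if 0 < i \<and> j = i - 1 then (b - c) * vv (i - 1) else 0) = (b - c) * (if 0 < i then vv (i-1) else 0)"
    proof (cases "0 < i")
      case True
      have "i - 1 < n" using i by simp
      then show ?thesis using True by (simp add: sum.delta')
    qed simp
    also have "0 + (1 - c) * vv i + (b - c) * (if i + 1 < n then vv (i+1) else 0) + (b - c) * (if 0 < i then vv (i-1) else 0)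
        = (1 - c) * vv i + (b - c) * ((if i + 1 < n then vv (i+1) else 0) + (if 0 < i then vv (i-1) else 0))"
      by (simp only: distrib_left add_0_left add.assoc)
    also have "\<dots> = (1 - c) * vv i" using neigh[OF n i] by simp
    finally show "(Toep n 1 b c *\<^sub>v ?v) $ i = ((1 - c) \<cdot>\<^sub>v ?v) $ i" using i by simp
  qed
qed

lemma eig_one: "eigenvalue (Toep 1 1 b c) 1"
  unfolding eigenvalue_def eigenvector_def
proof (intro exI conjI)
  let ?v = "vec 1 (\<lambda>_. 1::real)"
  show "?v \<in> carrier_vec (dim_row (Toep 1 1 b c))" by (simp add: Toep_def)
  show "?v \<noteq> 0\<^sub>v (dim_row (Toep 1 1 b c))"
  proof
    assume "?v = 0\<^sub>v (dim_row (Toep 1 1 b c))"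
    then have "?v $ 0 = 0" by (simp add: Toep_def)
    then show False by simp
  qed
  show "Toep 1 1 b c *\<^sub>v ?v = 1 \<cdot>\<^sub>v ?v"
    by (rule eq_vecI) (auto simp: Toep_def scalar_prod_def tf_def)
qed


lemma tf_diag[simp]: "tf a b c i i = a" by (simp add: tf_def)

lemma finite_eigs:
  assumes "A \<in> carrier_mat n n"
  shows "finite {l. eigenvalue A (l::real)}"
proof -
  have "coeff (char_poly A) n = 1" using degree_monic_char_poly[OF assms] by simp
  then have "char_poly A \<noteq> 0" by auto
  then have "finite {l. poly (char_poly A) l = 0}" by (rule poly_roots_finite)
  then show ?thesis using eigenvalue_root_char_poly[OF assms] by simp
qed

lemma diag_toep:
  assumes "a \<noteq> 0"
  shows "diag_part_inv (Toep n a b c) * Toep n a b c = Toep n 1 (b/a) (c/a)"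
proof -
  have "diag_part_inv (Toep n a b c) = mat_diag n (\<lambda>i. 1 / Toep n a b c $$ (i,i))"
    by (simp add: diag_part_inv_def Toep_def)
  then have "diag_part_inv (Toep n a b c) * Toep n a b c
     = mat n n (\<lambda>(i,j). (1 / Toep n a b c $$ (i,i)) * Toep n a b c $$ (i,j))"
    by (simp add: mat_diag_mult_left[of _ n n] Toep_def)
  also have "\<dots> = Toep n 1 (b/a) (c/a)"
    by (rule eq_matI) (auto simp: Toep_def tf_def assms)
  finally show ?thesis .
qed

lemma main_toep:
  fixes p :: nat and s :: real
  assumes p: "p \<ge> 1" and s: "s > 0"
  defines "A \<equiv> Toep (2^p - 1) (s * (2 * 2^p / 3 - 1)) (s * (2^p / 6 - 1)) (- s)"
  shows "1 \<le> lambda_max (diag_part_inv A * A) \<and> lambda_max (diag_part_inv A * A) < 3"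
proof -
  define M :: real where "M = 2^p"
  define d where "d = 2 * M / 3 - 1"
  define n :: nat where "n = 2^p - 1"
  have M2: "M \<ge> 2"
  proof -
    have "(2::real)^1 \<le> 2^p" by (rule power_increasing) (use p in auto)
    then show ?thesis by (simp add: M_def)
  qed
  have d: "d > 0" using M2 by (simp add: d_def)
  have C: "diag_part_inv A * A = Toep n 1 ((M/6 - 1)/d) (-1/d)"
    unfolding A_def using s d by (subst diag_toep) (auto simp: M_def d_def n_def)
  define S where "S = {l. eigenvalue (Toep n 1 ((M/6 - 1)/d) (-1/d)) l}"
  have fin: "finite S" unfolding S_def by (rule finite_eigs[of _ n]) (simp add: Toep_def)
  have up: "l < 3" if "l \<in> S" for l
  proof -
    from that gersh[of "Toep n 1 ((M/6 - 1)/d) (-1/d)" n l] obtain i where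
      i: "i < n" "\<bar>l - 1\<bar> \<le> (\<Sum>j\<in>{0..<n}-{i}. \<bar>tf 1 ((M/6 - 1)/d) (-1/d) i j\<bar>)"
      by (auto simp: S_def Toep_def)
    show ?thesis
    proof (cases "p = 1")
      case True
      then have "n = 1" by (simp add: n_def)
      with i have "{0..<n}-{i} = {}" by auto
      with i show ?thesis by simp
    next
      case False
      then have "p \<ge> 2" using p by simp
      have M4: "M \<ge> 4"
      proof -
        have "(2::real)^2 \<le> 2^p" by (rule power_increasing) (use \<open>p \<ge> 2\<close> in auto)
        then show ?thesis by (simp add: M_def)
      qed
      have rn: "real n = M - 1" by (simp add: n_def M_def of_nat_diff)
      have "\<bar>l - 1\<bar> \<le> real (n - 1) * \<bar>-1/d\<bar> + 2 * \<bar>(M/6 - 1)/d\<bar>"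
        using i rowsum_bound[OF i(1), of 1 "(M/6 - 1)/d" "-1/d"] by linarith
      also have "real (n - 1) = M - 2" using rn M4 by (simp add: of_nat_diff)
      also have "(M - 2) * \<bar>-1/d\<bar> + 2 * \<bar>(M/6 - 1)/d\<bar> = ((M - 2) + 2 * \<bar>M/6 - 1\<bar>) / d"
        using d by (simp add: abs_divide field_simps)
      also have "\<dots> < 2"
      proof -
        have "(M - 2) + 2 * \<bar>M/6 - 1\<bar> < 2 * d" using M4 unfolding d_def by (cases "M \<ge> 6") auto
        then show ?thesis using d by (simp add: divide_less_eq)
      qed
      finally show ?thesis by linarith
    qed
  qed
  obtain l0 where l0: "l0 \<in> S" "l0 \<ge> 1"
  proof (cases "p = 1")
    case True
    then have "n = 1" by (simp add: n_def)
    then have "1 \<in> S" unfolding S_def using eig_one by simp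
    then show ?thesis using that by auto
  next
    case False
    then have "p \<ge> 2" using p by simp
    define t :: nat where "t = 2^(p-2) - 1"
    have "(2::nat)^p = 4 * 2^(p-2)"
    proof -
      have e: "2 + (p - 2) = p" using \<open>p \<ge> 2\<close> by simp
      have "(2::nat)^2 * 2^(p-2) = 2^(2 + (p-2))" by (simp only: power_add)
      then show ?thesis unfolding e by simp
    qed
    moreover have "(2::nat)^(p-2) \<ge> 1" by simp
    ultimately have "n = 4*t+3" unfolding n_def t_def by linarith
    then have "1 - (-1/d) \<in> S" unfolding S_def using eig_big by blast
    moreover have "1 - (-1/d) \<ge> 1" using d by simp
    ultimately show ?thesis using that by blast
  qed
  have "Max S \<ge> 1" using Max_ge[OF fin l0(1)] l0(2) by linarith
  moreover have "Max S < 3" using up Max_in[OF fin] l0(1) by blast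
  ultimately show ?thesis unfolding lambda_max_def C S_def by simp
qed

theorem lemma4p6:
  fixes q N k :: nat
  assumes "q \<ge> 1" and "N = 2 ^ q" and "1 \<le> k" and "k \<le> q"
  shows "1 \<le> lambda_max (diag_part_inv (Bmat N k) * Bmat N k)
       \<and> lambda_max (diag_part_inv (Bmat N k) * Bmat N k) < 3"
proof -
  have B: "Bmat N k = Toep (2^(q-k+1) - 1)
      (16^(k-1) * (2 * 2^(q-k+1) / 3 - 1)) (16^(k-1) * (2^(q-k+1) / 6 - 1)) (- (16^(k-1)))"
    by (rule Bmat_closed[OF assms])
  have p: "q-k+1 \<ge> 1" by simp
  have s: "(16::real)^(k-1) > 0" by simp
  show ?thesis unfolding B by (rule main_toep[OF p s])
qed
end
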